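(* Let $\mathbb{F}$ be an algebraically closed field of characteristic $>3$. Then the COD of $\mathfrak{sl}_3(\mathbb{F})$ is unique up to conjugacy: any two CODs of $\mathfrak{sl}_3(\mathbb{F})$ are conjugate.
   Context: $\mathfrak{sl}_n(\mathbb{F})$ denotes the Lie algebra of $n\times n$ traceless matrices over $\mathbb{F}$. A Cartan subalgebra is a nilpotent self-normalizing subalgebra. A classical Cartan subalgebra of $\mathfrak{L}=\mathfrak{sl}_n(\mathbb{F})$ (with $\ell=\mathrm{char}\,\mathbb{F}$) is an abelian Cartan subalgebra $H$ such that: (a) $\mathfrak{L}=\bigoplus_\alpha \mathfrak{L}_\alpha$ with $\mathfrak{L}_\alpha=\{x: [x,h]=\alpha(h)x\ \forall h\in H\}$ over linear functionals $\alpha$ on $H$ (roots); (b) for each root $\alpha\ne0$, $[\mathfrak{L}_\alpha,\mathfrak{L}_{-\alpha}]$ is one-dimensional; (c) for roots $\alpha,\beta$ with $\beta\neq0$, not all $\alpha+k\beta$ ($1\le k\le \ell-1$) are roots. The Killing form is $K(A,B)=2n\,\mathrm{Tr}(AB)$. A COD of $\mathfrak{sl}_n(\mathbb{F})$ is a vector space decomposition $\mathfrak{sl}_n(\mathbb{F})=H_0\oplus\cdots\oplus H_n$ into classical Cartan subalgebras that are pairwise orthogonal with respect to $K$. Two CODs are conjugate if there is a Lie algebra automorphism of $\mathfrak{sl}_n(\mathbb{F})$ mapping each component of the first decomposition onto exactly one component of the second. *)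

theory Defs
  imports "HOL-Analysis.Analysis" "HOL-Computational_Algebra.Polynomial"
begin

definition smat :: "'a::field \<Rightarrow> 'a^'n^'n \<Rightarrow> 'a^'n^'n" where
  "smat c A = (\<chi> i j. c * A$i$j)"

definition lie :: "'a::field^'n^'n \<Rightarrow> 'a^'n^'n \<Rightarrow> 'a^'n^'n" where
  "lie A B = A ** B - B ** A"

definition sl :: "('a::field^'n^'n) set" where
  "sl = {A. trace A = 0}"

definition killing :: "'a::field^'n^'n \<Rightarrow> 'a^'n^'n \<Rightarrow> 'a" where
  "killing A B = 2 * of_nat CARD('n) * trace (A ** B)"

definition lspan :: "('a::field^'n^'n) set \<Rightarrow> ('a^'n^'n) set" where
  "lspan S = {(\<Sum>i<m. smat (c i) (v i)) | (m::nat) c v. \<forall>i<m. v i \<in> S}"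

definition one_dim :: "('a::field^'n^'n) set \<Rightarrow> bool" where
  "one_dim V \<longleftrightarrow> (\<exists>v. v \<noteq> 0 \<and> V = range (\<lambda>c. smat c v))"

definition subalg :: "('a::field^'n^'n) set \<Rightarrow> bool" where
  "subalg H \<longleftrightarrow> H \<subseteq> sl \<and> 0 \<in> H \<and> (\<forall>x\<in>H. \<forall>y\<in>H. x + y \<in> H)
     \<and> (\<forall>c. \<forall>x\<in>H. smat c x \<in> H) \<and> (\<forall>x\<in>H. \<forall>y\<in>H. lie x y \<in> H)"

fun brl :: "('a::field^'n^'n) list \<Rightarrow> 'a^'n^'n \<Rightarrow> 'a^'n^'n" where
  "brl [] y = y"
| "brl (x # xs) y = lie x (brl xs y)"

definition nilpotent_sub :: "('a::field^'n^'n) set \<Rightarrow> bool" where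
  "nilpotent_sub H \<longleftrightarrow> (\<exists>m. \<forall>xs y. length xs = m \<and> set xs \<subseteq> H \<and> y \<in> H \<longrightarrow> brl xs y = 0)"

definition self_normalizing :: "('a::field^'n^'n) set \<Rightarrow> bool" where
  "self_normalizing H \<longleftrightarrow> {x \<in> sl. \<forall>h\<in>H. lie x h \<in> H} = H"

definition cartan_sub :: "('a::field^'n^'n) set \<Rightarrow> bool" where
  "cartan_sub H \<longleftrightarrow> subalg H \<and> nilpotent_sub H \<and> self_normalizing H"

definition abelian_sub :: "('a::field^'n^'n) set \<Rightarrow> bool" where
  "abelian_sub H \<longleftrightarrow> (\<forall>x\<in>H. \<forall>y\<in>H. lie x y = 0)"

text \<open>Linear functionals on H, normalised to vanish outside H (so each functional on H
  has exactly one representative).\<close>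
definition lin_fun :: "('a::field^'n^'n) set \<Rightarrow> ('a^'n^'n \<Rightarrow> 'a) \<Rightarrow> bool" where
  "lin_fun H \<alpha> \<longleftrightarrow> (\<forall>x\<in>H. \<forall>y\<in>H. \<alpha> (x + y) = \<alpha> x + \<alpha> y)
     \<and> (\<forall>c. \<forall>x\<in>H. \<alpha> (smat c x) = c * \<alpha> x) \<and> (\<forall>x. x \<notin> H \<longrightarrow> \<alpha> x = 0)"

definition rootspace :: "('a::field^'n^'n) set \<Rightarrow> ('a^'n^'n \<Rightarrow> 'a) \<Rightarrow> ('a^'n^'n) set" where
  "rootspace H \<alpha> = {x \<in> sl. \<forall>h\<in>H. lie x h = smat (\<alpha> h) x}"

definition is_root :: "('a::field^'n^'n) set \<Rightarrow> ('a^'n^'n \<Rightarrow> 'a) \<Rightarrow> bool" where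
  "is_root H \<alpha> \<longleftrightarrow> lin_fun H \<alpha> \<and> rootspace H \<alpha> \<noteq> {0}"

definition root_decomp :: "('a::field^'n^'n) set \<Rightarrow> bool" where
  "root_decomp H \<longleftrightarrow> (\<forall>x\<in>sl. \<exists>!f. (\<forall>\<alpha>. f \<alpha> \<in> (if lin_fun H \<alpha> then rootspace H \<alpha> else {0}))
       \<and> finite {\<alpha>. f \<alpha> \<noteq> 0} \<and> x = (\<Sum>\<alpha>\<in>{\<alpha>. f \<alpha> \<noteq> 0}. f \<alpha>))"

definition classical_cartan :: "('a::field^'n^'n) set \<Rightarrow> bool" where
  "classical_cartan H \<longleftrightarrow> cartan_sub H \<and> abelian_sub H \<and> root_decomp H
     \<and> (\<forall>\<alpha>. is_root H \<alpha> \<and> \<alpha> \<noteq> (\<lambda>_. 0) \<longrightarrow>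
           one_dim (lspan {lie x y | x y. x \<in> rootspace H \<alpha> \<and> y \<in> rootspace H (\<lambda>h. - \<alpha> h)}))
     \<and> (\<forall>\<alpha> \<beta>. is_root H \<alpha> \<and> is_root H \<beta> \<and> \<beta> \<noteq> (\<lambda>_. 0) \<longrightarrow>
           \<not> (\<forall>k\<in>{1..CHAR('a) - 1}. is_root H (\<lambda>h. \<alpha> h + of_nat k * \<beta> h)))"

definition COD :: "(nat \<Rightarrow> ('a::field^'n^'n) set) \<Rightarrow> bool" where
  "COD H \<longleftrightarrow> (\<forall>i\<le>CARD('n). classical_cartan (H i))
     \<and> (\<forall>x\<in>sl. \<exists>!v. (\<forall>i\<le>CARD('n). v i \<in> H i) \<and> (\<forall>i>CARD('n). v i = 0)
                      \<and> x = (\<Sum>i\<le>CARD('n). v i))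
     \<and> (\<forall>i\<le>CARD('n). \<forall>j\<le>CARD('n). i \<noteq> j \<longrightarrow> (\<forall>x\<in>H i. \<forall>y\<in>H j. killing x y = 0))"

definition lie_automorphism :: "('a::field^'n^'n \<Rightarrow> 'a^'n^'n) \<Rightarrow> bool" where
  "lie_automorphism \<phi> \<longleftrightarrow> bij_betw \<phi> sl sl
     \<and> (\<forall>x\<in>sl. \<forall>y\<in>sl. \<phi> (x + y) = \<phi> x + \<phi> y)
     \<and> (\<forall>c. \<forall>x\<in>sl. \<phi> (smat c x) = smat c (\<phi> x))
     \<and> (\<forall>x\<in>sl. \<forall>y\<in>sl. \<phi> (lie x y) = lie (\<phi> x) (\<phi> y))"

definition COD_conjugate :: "(nat \<Rightarrow> ('a::field^'n^'n) set) \<Rightarrow> (nat \<Rightarrow> ('a^'n^'n) set) \<Rightarrow> bool" where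
  "COD_conjugate H H' \<longleftrightarrow> (\<exists>\<phi>. lie_automorphism \<phi> \<and>
     (\<forall>i\<le>CARD('n). \<exists>!j. j \<le> CARD('n) \<and> \<phi> ` H i = H' j))"

end

theory Submission
  imports Defs
begin

type_synonym 'a m3 = "'a^3^3"

lemmas ent = matrix_matrix_mult_def sum_3 vec_eq_iff forall_3 smat_def lie_def trace_def mat_def

lemma trace_zero[simp]: "trace (0::'a::semiring_1^'n^'n) = 0" by (simp add: trace_def)
lemma smat_mult_left: "smat c A ** B = smat c (A ** B)"
  by (simp add: smat_def matrix_matrix_mult_def vec_eq_iff sum_distrib_left mult.assoc)
lemma smat_mult_right: "A ** smat c B = smat c (A ** B)"
  by (simp add: smat_def matrix_matrix_mult_def vec_eq_iff sum_distrib_left mult.left_commute)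
lemma smat_smat: "smat c (smat d A) = smat (c*d) A"
  by (simp add: smat_def vec_eq_iff mult.assoc)
lemma smat_add: "smat c (A + B) = smat c A + smat c B"
  by (simp add: smat_def vec_eq_iff distrib_left)
lemma smat_add2: "smat (c + d) A = smat c A + smat d A"
  by (simp add: smat_def vec_eq_iff distrib_right)
lemma smat_diff: "smat c (A - B) = smat c A - smat c B"
  by (simp add: smat_def vec_eq_iff right_diff_distrib)
lemma smat_1[simp]: "smat 1 A = A" by (simp add: smat_def vec_eq_iff)
lemma smat_0[simp]: "smat 0 A = 0" by (simp add: smat_def vec_eq_iff)
lemma smat_zero[simp]: "smat c 0 = 0" by (simp add: smat_def vec_eq_iff)
lemma trace_smat: "trace (smat c A) = c * trace A"
  by (simp add: smat_def trace_def sum_distrib_left)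
lemma trace_lie: "trace (lie A B) = 0"
  unfolding lie_def trace_sub using trace_mul_sym[of A B] by simp
lemma smat_eq_0: "smat c A = 0 \<Longrightarrow> c \<noteq> 0 \<Longrightarrow> A = (0::'a::field^'n^'n)"
  by (simp add: smat_def vec_eq_iff)

lemma mm3: "((A::'a::semiring_1^3^3) ** B) $ i $ j = A$i$1*B$1$j + A$i$2*B$2$j + A$i$3*B$3$j"
  by (simp add: matrix_matrix_mult_def sum_3)
lemma tr3: "trace (A::'a::semiring_1^3^3) = A$1$1 + A$2$2 + A$3$3"
  by (simp add: trace_def sum_3)
lemma smat_nth: "smat c A $ i $ j = c * A $ i $ j" by (simp add: smat_def)
lemma mat_nth: "mat k $ i $ j = (if i = j then k else 0)" by (simp add: mat_def)
lemma CH3: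
  fixes m :: "'a::field m3"
  shows "m ** m ** m = smat (trace m) (m ** m) - smat (m$1$1*m$2$2 - m$1$2*m$2$1 + m$1$1*m$3$3 - m$1$3*m$3$1 + m$2$2*m$3$3 - m$2$3*m$3$2) m + smat (det m) (mat 1)"
  unfolding vec_eq_iff forall_3 
  by (simp only: mm3 tr3 smat_nth mat_nth det_3 vector_minus_component vector_add_component; simp; algebra)

definition e2 :: "'a::field m3 \<Rightarrow> 'a" where
  "e2 m = m$1$1*m$2$2 - m$1$2*m$2$1 + m$1$1*m$3$3 - m$1$3*m$3$1 + m$2$2*m$3$3 - m$2$3*m$3$2"

lemma N2: "trace (m**m) = trace m ^2 - 2 * e2 (m::'a::field m3)"
  unfolding e2_def by (simp only: tr3 mm3; algebra)
lemma N3: "trace (m**m**m) = trace m ^3 - 3 * trace m * e2 m + 3 * det (m::'a::field m3)"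
  unfolding e2_def by (simp only: tr3 mm3 det_3; algebra)

lemma nil3:
  fixes m :: "'a::field m3"
  assumes "trace m = 0" "trace (m**m) = 0" "trace (m**m**m) = 0" "(2::'a) \<noteq> 0" "(3::'a) \<noteq> 0"
  shows "m**m**m = 0"
proof -
  have "e2 m = 0" using N2[of m] assms by simp
  moreover have "det m = 0" using N3[of m] assms \<open>e2 m = 0\<close> by simp
  ultimately show ?thesis using CH3[of m] assms by (simp add: e2_def)
qed

lemma minors3:
  fixes m :: "'a::field m3"
  assumes t: "trace m = 0" and z: "m**m = 0" and two: "(2::'a) \<noteq> 0"
  shows "m$i$k*m$j$l = m$i$l*m$j$k"
proof -
  have "e2 m = 0" using N2[of m] assms by simp
  hence E: "m$1$1*m$2$2 - m$1$2*m$2$1 + m$1$1*m$3$3 - m$1$3*m$3$1 + m$2$2*m$3$3 - m$2$3*m$3$2 = 0"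
    by (simp add: e2_def)
  have T: "m$1$1 + m$2$2 + m$3$3 = 0" using t by (simp add: tr3)
  have Z: "\<And>a b. m$a$1*m$1$b + m$a$2*m$2$b + m$a$3*m$3$b = 0"
    using z by (metis mm3 zero_index)
  note Z11 = Z[of 1 1] and Z12 = Z[of 1 2] and Z13 = Z[of 1 3] and Z21 = Z[of 2 1] and Z22 = Z[of 2 2]
   and Z23 = Z[of 2 3] and Z31 = Z[of 3 1] and Z32 = Z[of 3 2] and Z33 = Z[of 3 3]
  have "\<forall>i j k l. m$i$k*m$j$l = m$i$l*m$j$k"
    unfolding forall_3
    apply (insert E T Z11 Z12 Z13 Z21 Z22 Z23 Z31 Z32 Z33)
    by (intro conjI; ((simp add: mult.commute; fail) | algebra))
  thus ?thesis by blast
qed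

definition eig :: "'a::field m3 set \<Rightarrow> ('a^3) set" where
  "eig H = {v. \<forall>h\<in>H. \<exists>c. h *v v = c *s v}"

lemma char_23:
  assumes "CHAR('a::field) > 3"
  shows "(2::'a) \<noteq> 0" "(3::'a) \<noteq> 0"
proof -
  have "of_nat 2 \<noteq> (0::'a)" using assms by (subst of_nat_eq_0_iff_char_dvd) (auto dest: dvd_imp_le)
  thus "(2::'a) \<noteq> 0" by simp
  have "of_nat 3 \<noteq> (0::'a)" using assms by (subst of_nat_eq_0_iff_char_dvd) (auto dest: dvd_imp_le)
  thus "(3::'a) \<noteq> 0" by simp
qed

lemma lie_mult: "lie ((A::'a::field m3) ** B) h = A ** lie B h + lie A h ** B"
  unfolding vec_eq_iff forall_3 lie_def
  by (simp only: mm3 vector_minus_component vector_add_component; algebra)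

lemma wpow:
  assumes "lie (m::'a::field m3) h = smat c m"
  shows "lie (m**m) h = smat (2*c) (m**m)" "lie (m**m**m) h = smat (3*c) (m**m**m)"
proof -
  show a: "lie (m**m) h = smat (2*c) (m**m)"
    using lie_mult[of m m h] assms by (simp add: smat_mult_left smat_mult_right smat_add2[symmetric])
  show "lie (m**m**m) h = smat (3*c) (m**m**m)"
    using lie_mult[of "m**m" m h] assms a
    by (simp add: smat_mult_left smat_mult_right smat_add2[symmetric] algebra_simps)
qed

lemma trace_weight:
  assumes "lie (y::'a::field m3) h = smat c y" "c \<noteq> 0"
  shows "trace y = 0"
  using trace_lie[of y h] assms by (simp add: trace_smat)

definition E12 :: "'a::field m3" where "E12 = (\<chi> i j. if i = 1 \<and> j = 2 then 1 else 0)"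
definition E21 :: "'a::field m3" where "E21 = (\<chi> i j. if i = 2 \<and> j = 1 then 1 else 0)"

lemma E_lie: "lie E12 E21 \<noteq> (0::'a::field m3)"
proof
  assume "lie E12 E21 = (0::'a m3)"
  hence "lie E12 E21 $1$1 = (0::'a)" by simp
  thus False by (simp add: lie_def mm3 E12_def E21_def)
qed

lemma E_sl: "E12 \<in> sl" "E21 \<in> sl"
  by (simp_all add: sl_def tr3 E12_def E21_def)

lemma lie_0_left[simp]: "lie 0 h = (0::'a::field^'n^'n)" by (simp add: lie_def)

lemma cc_facts:
  assumes "classical_cartan H"
  shows "H \<subseteq> sl" "0 \<in> H" "abelian_sub H" "root_decomp H"
    "\<And>x. x \<in> sl \<Longrightarrow> (\<forall>h\<in>H. lie x h = 0) \<Longrightarrow> x \<in> H"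
    "\<And>x y. x\<in>H \<Longrightarrow> y\<in>H \<Longrightarrow> x+y\<in>H" "\<And>c x. x\<in>H \<Longrightarrow> smat c x \<in> H"
proof -
  have c: "subalg H" "self_normalizing H" "abelian_sub H" "root_decomp H"
    using assms by (simp_all add: classical_cartan_def cartan_sub_def)
  show "H \<subseteq> sl" "0 \<in> H" "abelian_sub H" "root_decomp H"
    "\<And>x y. x\<in>H \<Longrightarrow> y\<in>H \<Longrightarrow> x+y\<in>H" "\<And>c x. x\<in>H \<Longrightarrow> smat c x \<in> H"
    using c by (auto simp: subalg_def)
  fix x assume x: "x \<in> sl" "\<forall>h\<in>H. lie x h = 0"
  have "0 \<in> H" using c by (auto simp: subalg_def)
  hence mem: "x \<in> {x \<in> sl. \<forall>h\<in>H. lie x h \<in> H}" using x by auto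
  have eq: "{x \<in> sl. \<forall>h\<in>H. lie x h \<in> H} = H" using c(2) by (simp add: self_normalizing_def)
  show "x \<in> H" using mem unfolding eq .
qed

lemma RV:
  fixes H :: "'a::field m3 set"
  assumes "classical_cartan H"
  shows "\<exists>m \<beta> h0. m \<noteq> 0 \<and> h0 \<in> H \<and> \<beta> h0 \<noteq> 0 \<and> (\<forall>h\<in>H. lie m h = smat (\<beta> h) m)"
proof (rule ccontr)
  assume N: "\<not> ?thesis"
  have allH: "x \<in> H" if x: "x \<in> sl" for x
  proof -
    have ex: "\<exists>f. (\<forall>\<alpha>. f \<alpha> \<in> (if lin_fun H \<alpha> then rootspace H \<alpha> else {0}))
       \<and> finite {\<alpha>. f \<alpha> \<noteq> 0} \<and> x = (\<Sum>\<alpha>\<in>{\<alpha>. f \<alpha> \<noteq> 0}. f \<alpha>)"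
      using ex1_implies_ex[OF bspec[OF cc_facts(4)[OF assms, unfolded root_decomp_def] x]] .
    then obtain f where
      f1: "\<forall>\<alpha>. f \<alpha> \<in> (if lin_fun H \<alpha> then rootspace H \<alpha> else {0})"
      and f3: "x = (\<Sum>\<alpha>\<in>{\<alpha>. f \<alpha> \<noteq> 0}. f \<alpha>)"
      by blast
    have L: "lin_fun H \<alpha> \<and> (\<forall>h\<in>H. lie (f \<alpha>) h = smat (\<alpha> h) (f \<alpha>))" if "f \<alpha> \<noteq> 0" for \<alpha>
      using f1[rule_format, of \<alpha>] that by (auto simp: rootspace_def split: if_splits)
    have sub: "{\<alpha>. f \<alpha> \<noteq> 0} \<subseteq> {\<lambda>_. 0}"
    proof
      fix \<alpha> assume a: "\<alpha> \<in> {\<alpha>. f \<alpha> \<noteq> 0}"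
      show "\<alpha> \<in> {\<lambda>_. 0}"
      proof (rule ccontr)
        assume "\<alpha> \<notin> {\<lambda>_. 0}"
        then obtain y where y: "\<alpha> y \<noteq> 0" by auto
        have "y \<in> H" using L[of \<alpha>] a y by (auto simp: lin_fun_def)
        have "f \<alpha> \<noteq> 0" "\<forall>h\<in>H. lie (f \<alpha>) h = smat (\<alpha> h) (f \<alpha>)" using L[of \<alpha>] a by auto
        thus False using N y \<open>y \<in> H\<close> by blast
      qed
    qed
    have "\<forall>h\<in>H. lie x h = 0"
    proof (cases "{\<alpha>. f \<alpha> \<noteq> 0} = {}")
      case True thus ?thesis using f3 by simp
    next
      case False
      hence eq: "{\<alpha>. f \<alpha> \<noteq> 0} = {\<lambda>_. 0}" using sub by blast
      hence "f (\<lambda>_. 0) \<noteq> 0" by blast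
      thus ?thesis using f3 eq L[of "\<lambda>_. 0"] by simp
    qed
    thus ?thesis using cc_facts(5)[OF assms x] by blast
  qed
  have "E12 \<in> H" "E21 \<in> H" using allH E_sl by auto
  hence "lie E12 E21 = (0::'a m3)" using cc_facts(3)[OF assms] by (simp add: abelian_sub_def)
  thus False using E_lie by blast
qed

lemma mv3: "((A::'a::semiring_1^3^3) *v x) $ i = A$i$1*x$1 + A$i$2*x$2 + A$i$3*x$3"
  by (simp add: matrix_vector_mult_def sum_3)

lemma CE:
  fixes M :: "'a::field m3"
  assumes nz: "M \<noteq> 0" and mn: "\<And>i j k l. M$i$k*M$j$l = M$i$l*M$j$k"
    and w: "\<forall>h\<in>H. lie M h = smat (\<beta> h) M"
  shows "\<exists>u. u \<noteq> 0 \<and> u \<in> eig H"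
proof -
  obtain i j where ij: "M$i$j \<noteq> 0" using nz by (metis vec_eq_iff zero_index)
  define u where "u = (\<chi> r. M$r$j)"
  have "u \<noteq> 0" using ij by (metis u_def vec_lambda_beta zero_index)
  moreover have "u \<in> eig H"
    unfolding eig_def
  proof (intro CollectI ballI)
    fix h assume h: "h \<in> H"
    define c where "c = (M$i$1*h$1$j + M$i$2*h$2$j + M$i$3*h$3$j)/M$i$j - \<beta> h"
    have cM: "c * M$i$j = M$i$1*h$1$j + M$i$2*h$2$j + M$i$3*h$3$j - \<beta> h * M$i$j"
      using ij by (simp add: c_def field_simps)
    have "h *v u = c *s u"
    proof (subst vec_eq_iff, intro allI)
      fix r
      have L: "M$r$1*h$1$j + M$r$2*h$2$j + M$r$3*h$3$j - (h$r$1*M$1$j + h$r$2*M$2$j + h$r$3*M$3$j) = \<beta> h * M$r$j"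
        using arg_cong[OF w[rule_format, OF h], of "\<lambda>X. X$r$j"] by (simp add: lie_def mm3 smat_nth)
      have m1: "M$r$1*M$i$j = M$r$j*M$i$1" and m2: "M$r$2*M$i$j = M$r$j*M$i$2" and m3: "M$r$3*M$i$j = M$r$j*M$i$3"
        using mn by blast+
      have "(h$r$1*M$1$j + h$r$2*M$2$j + h$r$3*M$3$j) * M$i$j = (c * M$r$j) * M$i$j"
        using L m1 m2 m3 cM by algebra
      hence "h$r$1*M$1$j + h$r$2*M$2$j + h$r$3*M$3$j = c * M$r$j" using ij by simp
      thus "(h *v u) $ r = (c *s u) $ r" by (simp add: mv3 u_def)
    qed
    thus "\<exists>c. h *v u = c *s u" by blast
  qed
  ultimately show ?thesis by blast
qed

lemma exists_eig:
  fixes H :: "'a::field m3 set"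
  assumes cc: "classical_cartan H" and ch: "CHAR('a) > 3"
  shows "\<exists>u. u \<noteq> 0 \<and> u \<in> eig H"
proof -
  obtain m \<beta> h0 where m: "m \<noteq> 0" "h0 \<in> H" "\<beta> h0 \<noteq> 0" and w: "\<forall>h\<in>H. lie m h = smat (\<beta> h) m"
    using RV[OF cc] by blast
  have two: "(2::'a) \<noteq> 0" and three: "(3::'a) \<noteq> 0" using char_23[OF ch] by auto
  have w0: "lie m h0 = smat (\<beta> h0) m" using w m by blast
  have t1: "trace m = 0" using trace_weight[OF w0] m by blast
  have t2: "trace (m**m) = 0" using trace_weight[OF wpow(1)[OF w0]] m two by simp
  have t3: "trace (m**m**m) = 0" using trace_weight[OF wpow(2)[OF w0]] m three by simp
  have cube: "m**m**m = 0" using nil3[OF t1 t2 t3 two three] .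
  show ?thesis
  proof (cases "m**m = 0")
    case True
    show ?thesis using CE[OF m(1) minors3[OF t1 True two] w] by blast
  next
    case False
    have sq: "(m**m)**(m**m) = 0" using cube by (metis matrix_mul_assoc times0_left)
    have w2: "\<forall>h\<in>H. lie (m**m) h = smat (2 * \<beta> h) (m**m)" using w wpow(1) by blast
    show ?thesis using CE[OF False minors3[OF t2 sq two] w2] by blast
  qed
qed

lemma smat_mv: "smat c A *v x = c *s (A *v (x::'a::field^'n))"
  by (simp add: smat_def matrix_vector_mult_def vec_eq_iff sum_distrib_left mult.assoc)
lemma mv_scale: "A *v (c *s x) = c *s (A *v (x::'a::field^'n))"
  by (simp add: matrix_vector_mult_def vec_eq_iff sum_distrib_left mult.left_commute)
lemma sum_mv: "(sum f S) *v u = (\<Sum>a\<in>S. f a *v (u::'a::field^'n))"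
  by (induction S rule: infinite_finite_induct) (simp_all add: matrix_vector_mult_add_rdistrib)
lemma scale_diff: "(a - b) *s x = a *s x - b *s (x::'a::field^'n)"
  by (simp add: vec_eq_iff algebra_simps)

lemma eig_shift:
  assumes u: "u \<in> eig H" and y: "\<forall>h\<in>H. lie y h = smat (\<gamma> h) y"
  shows "y *v u \<in> eig H"
  unfolding eig_def
proof (intro CollectI ballI)
  fix h assume h: "h \<in> H"
  obtain c where c: "h *v u = c *s u" using u h by (auto simp: eig_def)
  have "y ** h - h ** y = smat (\<gamma> h) y" using y h by (simp add: lie_def)
  hence hy: "h ** y = y ** h - smat (\<gamma> h) y" by (simp add: algebra_simps)
  have "h *v (y *v u) = (h ** y) *v u" by (simp add: matrix_vector_mul_assoc)
  also have "\<dots> = y *v (h *v u) - \<gamma> h *s (y *v u)"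
    by (simp add: hy matrix_vector_mult_diff_rdistrib smat_mv matrix_vector_mul_assoc)
  also have "\<dots> = (c - \<gamma> h) *s (y *v u)" by (simp add: c mv_scale scale_diff)
  finally show "\<exists>c. h *v (y *v u) = c *s (y *v u)" by blast
qed

lemma span_eig:
  fixes H :: "'a::field m3 set"
  assumes cc: "classical_cartan H" and u0: "u \<noteq> 0" and u: "u \<in> eig H"
  shows "vec.span (eig H) = UNIV"
proof -
  have zu: "z *v u \<in> vec.span (eig H)" if z: "z \<in> sl" for z
  proof -
    have ex: "\<exists>f. (\<forall>\<alpha>. f \<alpha> \<in> (if lin_fun H \<alpha> then rootspace H \<alpha> else {0}))
       \<and> finite {\<alpha>. f \<alpha> \<noteq> 0} \<and> z = (\<Sum>\<alpha>\<in>{\<alpha>. f \<alpha> \<noteq> 0}. f \<alpha>)"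
      using ex1_implies_ex[OF bspec[OF cc_facts(4)[OF cc, unfolded root_decomp_def] z]] .
    then obtain f where
      f1: "\<forall>\<alpha>. f \<alpha> \<in> (if lin_fun H \<alpha> then rootspace H \<alpha> else {0})"
      and f3: "z = (\<Sum>\<alpha>\<in>{\<alpha>. f \<alpha> \<noteq> 0}. f \<alpha>)"
      by blast
    have "f \<alpha> *v u \<in> eig H" if "f \<alpha> \<noteq> 0" for \<alpha>
    proof -
      have "\<forall>h\<in>H. lie (f \<alpha>) h = smat (\<alpha> h) (f \<alpha>)"
        using f1[rule_format, of \<alpha>] that by (auto simp: rootspace_def split: if_splits)
      thus ?thesis using eig_shift[OF u] by blast
    qed
    hence "(\<Sum>\<alpha>\<in>{\<alpha>. f \<alpha> \<noteq> 0}. f \<alpha> *v u) \<in> vec.span (eig H)"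
      by (intro vec.span_sum) (auto intro: vec.span_base)
    thus ?thesis using f3 by (simp add: sum_mv)
  qed
  obtain l where l: "u$l \<noteq> 0" using u0 by (metis vec_eq_iff zero_index)
  define k where "k = l + 1"
  have kl: "k \<noteq> l" unfolding k_def using exhaust_3[of l] by auto
  show ?thesis
  proof (rule set_eqI, rule iffI)
    fix w :: "'a^3"
    define z :: "'a m3" where "z = (\<chi> r s. (if s = l then w$r / u$l else 0) - (if r = k \<and> s = k then w$l/u$l else 0))"
    define y :: "'a m3" where "y = (\<chi> r s. if r = k \<and> s = l then 1/u$l else 0)"
    have zsl: "z \<in> sl" "y \<in> sl" using kl exhaust_3[of l] exhaust_3[of k]
      by (auto simp: sl_def tr3 z_def y_def)
    have "w = z *v u + (w$l/u$l*u$k) *s (y *v u)"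
      unfolding vec_eq_iff forall_3 using l kl exhaust_3[of l] exhaust_3[of k]
      by (auto simp: mv3 z_def y_def field_simps)
    moreover have "z *v u + (w$l/u$l*u$k) *s (y *v u) \<in> vec.span (eig H)"
      using zu[OF zsl(1)] zu[OF zsl(2)] by (intro vec.span_add vec.span_scale)
    ultimately show "w \<in> vec.span (eig H)" by simp
  qed simp
qed

definition isdiag :: "'a::field m3 \<Rightarrow> bool" where "isdiag A \<longleftrightarrow> (\<forall>i j. i \<noteq> j \<longrightarrow> A$i$j = 0)"
definition D0 :: "'a::field m3 set" where "D0 = {A. isdiag A \<and> trace A = 0}"

lemma basis_eig:
  fixes E :: "('a::field^3) set"
  assumes "vec.span E = UNIV"
  shows "\<exists>g::'a m3. invertible g \<and> (\<forall>j. column j g \<in> E)"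
proof -
  obtain B where B: "B \<subseteq> E" "vec.independent B" "E \<subseteq> vec.span B"
    using vec.maximal_independent_subset[of E] by blast
  have sp: "vec.span B = UNIV"
  proof -
    have "UNIV \<subseteq> vec.span B" using assms vec.span_mono[OF B(3)] by (simp add: vec.span_span)
    thus ?thesis by auto
  qed
  have fin: "finite B" using B(2) vec.finiteI_independent by blast
  have "card B = vec.dim B" using vec.dim_eq_card_independent[OF B(2)] by simp
  also have "\<dots> = vec.dim (UNIV :: ('a^3) set)" using sp vec.dim_span[of B] by simp
  also have "\<dots> = 3" by (simp add: card_cart_basis)
  finally have cB: "card B = card (UNIV::3 set)" by simp
  obtain f where f: "bij_betw f (UNIV::3 set) B"
    using finite_same_card_bij[OF _ fin cB[symmetric]] by auto
  define g :: "'a m3" where "g = (\<chi> i j. f j $ i)"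
  have col: "column j g = f j" for j by (simp add: g_def column_def vec_eq_iff)
  have "columns g = B" using f by (auto simp: columns_def col bij_betw_def)
  hence "\<exists>B'. g ** B' = mat 1" using matrix_right_invertible_span_columns[of g] sp by simp
  hence "invertible g" using invertible_right_inverse by blast
  moreover have "\<forall>j. column j g \<in> E" using f B(1) by (auto simp: col bij_betw_def)
  ultimately show ?thesis by blast
qed

lemma diag_comm: "isdiag a \<Longrightarrow> isdiag b \<Longrightarrow> a ** b = b ** (a::'a::field m3)"
  unfolding isdiag_def vec_eq_iff forall_3 by (simp add: mm3)

lemma trace_conj: "g' ** g = mat 1 \<Longrightarrow> trace (g ** d ** g') = trace (d::'a::field m3)"
  by (metis matrix_mul_assoc matrix_mul_rid trace_mul_sym)

lemma diag_of_eig: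
  fixes g :: "'a::field m3"
  assumes gg: "g' ** g = mat 1" "g ** g' = mat 1" and c: "\<forall>j. h *v column j g = c j *s column j g"
  shows "h = g ** (\<chi> i j. if i = j then c i else 0) ** g'"
proof -
  have "h ** g = g ** (\<chi> i j. if i = j then c i else 0)"
  proof -
    have "\<And>i j. (h ** g)$i$j = (h *v column j g)$i"
      by (simp add: matrix_matrix_mult_def matrix_vector_mult_def column_def)
    hence 1: "\<And>i j. (h ** g)$i$j = c j * g$i$j" using c by (simp add: column_def)
    have 2: "\<And>i j. (g ** (\<chi> i j. if i = j then c i else 0))$i$j = c j * g$i$j"
      subgoal for i j using exhaust_3[of j] by (auto simp: mm3)
      done
    show ?thesis unfolding vec_eq_iff using 1 2 by simp
  qed
  hence "h ** g ** g' = g ** (\<chi> i j. if i = j then c i else 0) ** g'" by simp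
  thus ?thesis using gg by (metis matrix_mul_assoc matrix_mul_rid)
qed

lemma torus:
  fixes H :: "'a::field m3 set"
  assumes cc: "classical_cartan H" and ch: "CHAR('a) > 3"
  shows "\<exists>g g'. g ** g' = mat 1 \<and> g' ** g = mat 1 \<and> H = (\<lambda>d. g ** d ** g') ` D0"
proof -
  obtain u where u: "u \<noteq> 0" "u \<in> eig H" using exists_eig[OF cc ch] by blast
  obtain g :: "'a m3" where g: "invertible g" "\<forall>j. column j g \<in> eig H"
    using basis_eig[OF span_eig[OF cc u]] by blast
  obtain g' where gg: "g ** g' = mat 1" "g' ** g = mat 1" using g(1) by (auto simp: invertible_def)
  have hd: "\<exists>d\<in>D0. h = g ** d ** g'" if h: "h \<in> H" for h
  proof -
    have "\<forall>j. \<exists>c. h *v column j g = c *s column j g" using g(2) h by (auto simp: eig_def)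
    then obtain c where c: "\<forall>j. h *v column j g = c j *s column j g" by metis
    let ?d = "(\<chi> i j. if i = j then c i else 0) :: 'a m3"
    have e: "h = g ** ?d ** g'" using diag_of_eig[OF gg(2,1) c] .
    have "trace ?d = trace h" using trace_conj[OF gg(2), of ?d] e by simp
    also have "\<dots> = 0" using h cc_facts(1)[OF cc] by (auto simp: sl_def)
    finally have "?d \<in> D0" by (simp add: D0_def isdiag_def)
    thus ?thesis using e by blast
  qed
  have "(\<lambda>d. g ** d ** g') ` D0 \<subseteq> H"
  proof
    fix x assume "x \<in> (\<lambda>d. g ** d ** g') ` D0"
    then obtain d where d: "d \<in> D0" "x = g ** d ** g'" by blast
    have xsl: "x \<in> sl" using d trace_conj[OF gg(2), of d] by (simp add: sl_def D0_def)
    have "lie x h = 0" if h: "h \<in> H" for h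
    proof -
      obtain e where e: "e \<in> D0" "h = g ** e ** g'" using hd[OF h] by blast
      have "x ** h = g ** (d ** e) ** g'" using d e gg by (metis matrix_mul_assoc matrix_mul_rid)
      moreover have "h ** x = g ** (e ** d) ** g'" using d e gg by (metis matrix_mul_assoc matrix_mul_rid)
      moreover have "d ** e = e ** d" using d e diag_comm by (auto simp: D0_def)
      ultimately show ?thesis by (simp add: lie_def)
    qed
    thus "x \<in> H" using cc_facts(5)[OF cc xsl] by blast
  qed
  moreover have "H \<subseteq> (\<lambda>d. g ** d ** g') ` D0" using hd by blast
  ultimately show ?thesis using gg by blast
qed

definition W :: "(3 \<Rightarrow> 'a::field) \<Rightarrow> 'a m3" where
  "W s = (\<chi> i j. if i = j + 1 then s j else 0)"
definition T :: "(3 \<Rightarrow> 'a::field) \<Rightarrow> 'a m3 set" where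
  "T s = {smat a (W s) + smat b (W s ** W s) | a b. True}"
definition dg :: "(3 \<Rightarrow> 'a::field) \<Rightarrow> 'a m3" where
  "dg c = (\<chi> i j. if i = j then c i else 0)"

lemma W_nth: "W s $1$1 = 0" "W s $1$2 = 0" "W s $1$3 = s 3"
  "W s $2$1 = s 1" "W s $2$2 = 0" "W s $2$3 = 0"
  "W s $3$1 = 0" "W s $3$2 = s 2" "W s $3$3 = 0"
  by (simp_all add: W_def)

lemma dg_nth: "dg c $1$1 = c 1" "dg c $1$2 = 0" "dg c $1$3 = 0"
  "dg c $2$1 = 0" "dg c $2$2 = c 2" "dg c $2$3 = 0"
  "dg c $3$1 = 0" "dg c $3$2 = 0" "dg c $3$3 = c 3"
  by (simp_all add: dg_def)

lemma unb:
  fixes a b c d :: "'a::field"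
  assumes nz: "a \<noteq> 0" "b \<noteq> 0" "c \<noteq> 0" "d \<noteq> 0" and three: "(3::'a) \<noteq> 0"
    and r1: "1 + a + b = 0" and r2: "1 + 1/a + 1/b = 0" and r3: "1 + c + d = 0" and r4: "1 + 1/c + 1/d = 0"
    and r5: "1 + a/c + b/d = 0"
  shows "a*a + a + 1 = 0" "b = a*a" "c = a*a" "d = a"
proof -
  have ab: "a*b = 1" using r1 r2 nz by (simp add: field_simps) algebra
  have cd: "c*d = 1" using r3 r4 nz by (simp add: field_simps) algebra
  show qa: "a*a + a + 1 = 0" using ab r1 by algebra
  show b: "b = a*a" using ab r1 by algebra
  have qc: "c*c + c + 1 = 0" using cd r3 by algebra
  have dc: "d = c*c" using cd r3 by algebra
  have "(c - a) * (c - a*a) = 0" using qa qc by algebra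
  moreover have "c \<noteq> a"
  proof
    assume "c = a"
    hence "d = b" using dc b by simp
    hence "(3::'a) = 0" using r5 \<open>c = a\<close> nz by (simp add: field_simps) 
    thus False using three by simp
  qed
  ultimately show c: "c = a*a" by simp
  show "d = a" using dc c qa by algebra
qed

lemma conj_lin: "(g::'a::field m3) ** (smat x A + smat y B) ** g' = smat x (g ** A ** g') + smat y (g ** B ** g')"
  unfolding vec_eq_iff forall_3
  by (simp only: mm3 smat_nth vector_add_component; algebra)

lemma mm_rdistrib: "((A::'a::field m3) + B) ** C = A ** C + B ** C"
  unfolding vec_eq_iff forall_3 by (simp only: mm3 vector_add_component; algebra)

lemma conj_mult: "g' ** g = mat 1 \<Longrightarrow> (g ** A ** g') ** (g ** B ** g') = g ** (A ** B) ** (g'::'a::field m3)"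
  by (metis matrix_mul_assoc matrix_mul_rid)

lemma conj_pos: assumes "X ** g = g ** M" "g ** g' = mat 1" shows "X = g ** M ** (g'::'a::field m3)"
  by (metis assms matrix_mul_assoc matrix_mul_rid)

lemma ZD:
  fixes g g' :: "'a::field m3"
  assumes gg: "g ** g' = mat 1" "g' ** g = mat 1" and zd: "\<forall>d\<in>D0. \<forall>k. (g ** d ** g')$k$k = 0"
    and three: "(3::'a) \<noteq> 0"
  shows "\<exists>r. r 1 * r 2 * r 3 = 1 \<and> (\<lambda>d. g ** d ** g') ` D0 = T r"
proof -
  define d1 where "d1 = dg (\<lambda>i. if i = 1 then 1 else if i = 2 then -1 else (0::'a))"
  define d2 where "d2 = dg (\<lambda>i. if i = 1 then 0 else if i = 2 then 1 else (-1::'a))"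
  have D1: "d1 \<in> D0" "d2 \<in> D0" by (auto simp: d1_def d2_def D0_def isdiag_def dg_def tr3)
  have p: "g$k$i * g'$i$k = 1/3" for k i
  proof -
    have a: "g$k$1 * g'$1$k - g$k$2 * g'$2$k = 0"
      using zd D1(1) by (auto simp: mm3 d1_def dg_nth)
    have b: "g$k$2 * g'$2$k - g$k$3 * g'$3$k = 0"
      using zd D1(2) by (auto simp: mm3 d2_def dg_nth)
    have c: "g$k$1 * g'$1$k + g$k$2 * g'$2$k + g$k$3 * g'$3$k = 1"
      using arg_cong[OF gg(1), of "\<lambda>X. X$k$k"] by (simp add: mm3 mat_nth)
    have "g$k$1 * g'$1$k = 1/3" "g$k$2 * g'$2$k = 1/3" "g$k$3 * g'$3$k = 1/3"
      using a b c three by (simp_all add: field_simps)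
    thus ?thesis using exhaust_3[of i] by auto
  qed
  have nz: "g$k$i \<noteq> 0" for k i using p[of k i] three by auto
  have gp: "g'$i$k = 1/(3 * g$k$i)" for k i using p[of k i] nz[of k i] three by (simp add: field_simps)
  have R: "g$k$1/g$l$1 + g$k$2/g$l$2 + g$k$3/g$l$3 = 0" if "k \<noteq> l" for k l
  proof -
    have "(g ** g')$k$l = 0" using gg(1) that by (simp add: mat_nth)
    hence "g$k$1/(3*g$l$1) + g$k$2/(3*g$l$2) + g$k$3/(3*g$l$3) = 0" by (simp add: mm3 gp)
    thus ?thesis using three nz[of l 1] nz[of l 2] nz[of l 3] by (simp add: field_simps)
  qed
  define a where "a = g$2$2*g$1$1/(g$2$1*g$1$2)"
  define b where "b = g$2$3*g$1$1/(g$2$1*g$1$3)"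
  define c where "c = g$3$2*g$1$1/(g$3$1*g$1$2)"
  define d where "d = g$3$3*g$1$1/(g$3$1*g$1$3)"
  have nzabcd: "a \<noteq> 0" "b \<noteq> 0" "c \<noteq> 0" "d \<noteq> 0" using nz by (simp_all add: a_def b_def c_def d_def)
  have r1: "1 + a + b = 0"
    using R[of 2 1] nz by (simp add: a_def b_def field_simps; simp add: algebra_simps)
  have r2: "1 + 1/a + 1/b = 0"
    using R[of 1 2] nz by (simp add: a_def b_def field_simps; simp add: algebra_simps)
  have r3: "1 + c + d = 0"
    using R[of 3 1] nz by (simp add: c_def d_def field_simps; simp add: algebra_simps)
  have r4: "1 + 1/c + 1/d = 0"
    using R[of 1 3] nz by (simp add: c_def d_def field_simps; simp add: algebra_simps)
  have r5: "1 + a/c + b/d = 0"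
    using R[of 2 3] nz by (simp add: a_def b_def c_def d_def field_simps; simp add: algebra_simps)
  note U = unb[OF nzabcd three r1 r2 r3 r4 r5]
  have qa: "a*a + a + 1 = 0" using U by simp
  have e22: "g$2$2 * g$1$1 = a * g$2$1 * g$1$2" using nz by (simp add: a_def field_simps)
  have e23: "g$2$3 * g$1$1 = a*a * g$2$1 * g$1$3" using nz U(2) by (simp add: b_def field_simps)
  have e32: "g$3$2 * g$1$1 = a*a * g$3$1 * g$1$2" using nz U(3) by (simp add: c_def field_simps)
  have e33: "g$3$3 * g$1$1 = a * g$3$1 * g$1$3" using nz U(4) by (simp add: d_def field_simps)
  define r where "r = (\<lambda>j::3. if j = 1 then g$2$1/g$1$1 else if j = 2 then g$3$1/g$2$1 else g$1$1/g$3$1)"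
  define \<mu> where "\<mu> = dg (\<lambda>i::3. if i = 1 then 1 else if i = 2 then a*a else a)"
  have r123: "r 1 * r 2 * r 3 = 1" using nz by (simp add: r_def)
  have XG: "W r ** g = g ** \<mu>"
    unfolding vec_eq_iff forall_3
    apply (simp add: mm3 W_nth dg_nth r_def \<mu>_def)
    apply (insert nz[of 1 1] nz[of 2 1] nz[of 3 1] nz[of 1 2] nz[of 1 3] e22 e23 e32 e33 qa)
    apply (intro conjI; simp add: field_simps; algebra)
    done
  have X: "W r = g ** \<mu> ** g'" using conj_pos[OF XG gg(1)] .
  have X2: "W r ** W r = g ** (\<mu> ** \<mu>) ** g'" using X conj_mult[OF gg(2)] by simp
  have inD0: "smat x \<mu> + smat y (\<mu> ** \<mu>) \<in> D0" for x y
  proof -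
    have "trace (smat x \<mu> + smat y (\<mu> ** \<mu>)) = x * (a*a + a + 1) + y * ((a*a+a+1)*(a*a - a + 1) - a*(a*a + a + 1) + a*(a*a+a+1))"
      by (simp add: tr3 mm3 dg_nth smat_nth \<mu>_def) algebra
    also have "\<dots> = 0" using qa by simp
    finally show ?thesis unfolding D0_def isdiag_def
      by (simp add: forall_3 mm3 dg_nth smat_nth \<mu>_def)
  qed
  show ?thesis
  proof (intro exI conjI)
    show "r 1 * r 2 * r 3 = 1" by (rule r123)
    show "(\<lambda>d. g ** d ** g') ` D0 = T r"
    proof (rule set_eqI, rule iffI)
      fix y assume "y \<in> (\<lambda>d. g ** d ** g') ` D0"
      then obtain d where d: "d \<in> D0" "y = g ** d ** g'" by blast
      define x1 where "x1 = (d$1$1 + a*d$2$2 + a*a*d$3$3)/3"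
      define x2 where "x2 = (d$1$1 + a*a*d$2$2 + a*d$3$3)/3"
      have tr: "d$1$1 + d$2$2 + d$3$3 = 0" using d by (simp add: D0_def tr3)
      have off: "d$1$2 = 0" "d$1$3 = 0" "d$2$1 = 0" "d$2$3 = 0" "d$3$1 = 0" "d$3$2 = 0"
        using d by (auto simp: D0_def isdiag_def)
      have dd: "d = smat x1 \<mu> + smat x2 (\<mu> ** \<mu>)"
        unfolding vec_eq_iff forall_3
        apply (simp add: mm3 dg_nth smat_nth \<mu>_def off x1_def x2_def)
      proof (intro conjI)
        have s1: "(d$1$1 + a*d$2$2 + a*a*d$3$3) + (d$1$1 + a*a*d$2$2 + a*d$3$3) = 3 * d$1$1"
          using tr qa by algebra
        have s2: "(d$1$1 + a*d$2$2 + a*a*d$3$3) * (a*a) + (d$1$1 + a*a*d$2$2 + a*d$3$3) * (a*a*(a*a)) = 3 * d$2$2"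
          using tr qa by algebra
        have s3: "(d$1$1 + a*d$2$2 + a*a*d$3$3) * a + (d$1$1 + a*a*d$2$2 + a*d$3$3) * (a*a) = 3 * d$3$3"
          using tr qa by algebra
        show "d $ 1 $ 1 = (d $ 1 $ 1 + a * d $ 2 $ 2 + a * a * d $ 3 $ 3) / 3 + (d $ 1 $ 1 + a * a * d $ 2 $ 2 + a * d $ 3 $ 3) / 3"
          using s1 three by (simp add: add_divide_distrib[symmetric])
        show "d $ 2 $ 2 = (d $ 1 $ 1 + a * d $ 2 $ 2 + a * a * d $ 3 $ 3) * (a * a) / 3 + (d $ 1 $ 1 + a * a * d $ 2 $ 2 + a * d $ 3 $ 3) * (a * a * (a * a)) / 3"
          using s2 three by (simp add: add_divide_distrib[symmetric])
        show "d $ 3 $ 3 = (d $ 1 $ 1 + a * d $ 2 $ 2 + a * a * d $ 3 $ 3) * a / 3 + (d $ 1 $ 1 + a * a * d $ 2 $ 2 + a * d $ 3 $ 3) * (a * a) / 3"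
          using s3 three by (simp add: add_divide_distrib[symmetric])
      qed
      have "y = smat x1 (W r) + smat x2 (W r ** W r)" using d(2) dd X X2 conj_lin by metis
      thus "y \<in> T r" by (auto simp: T_def)
    next
      fix y assume "y \<in> T r"
      then obtain x y' where y: "y = smat x (W r) + smat y' (W r ** W r)" by (auto simp: T_def)
      hence "y = g ** (smat x \<mu> + smat y' (\<mu> ** \<mu>)) ** g'" using X X2 conj_lin by metis
      thus "y \<in> (\<lambda>d. g ** d ** g') ` D0" using inD0 by blast
    qed
  qed

qed

definition Q :: "(3 \<Rightarrow> 'a::field) \<Rightarrow> (3 \<Rightarrow> 'a) \<Rightarrow> 'a" where
  "Q s t = s 3 * t 1 * t 2 + s 1 * t 2 * t 3 + s 2 * t 3 * t 1"

lemma trace_WW2: "trace (W s ** (W t ** W t)) = Q s t"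
  by (simp add: tr3 mm3 W_nth Q_def; algebra)
lemma trace_W2W: "trace ((W s ** W s) ** W t) = Q t s"
  by (simp add: tr3 mm3 W_nth Q_def; algebra)

lemma W_in_T: "W s \<in> T s" "W s ** W s \<in> T s"
proof -
  have "W s = smat 1 (W s) + smat 0 (W s ** W s)" "W s ** W s = smat 0 (W s) + smat 1 (W s ** W s)" by simp_all
  thus "W s \<in> T s" "W s ** W s \<in> T s" unfolding T_def by blast+
qed

lemma orth_Q:
  assumes "\<forall>x\<in>T s. \<forall>y\<in>T t. trace (x ** y) = 0"
  shows "Q s t = 0" "Q t s = 0"
  using assms W_in_T trace_WW2 trace_W2W by metis+

lemma T_zero_diag: "x \<in> T s \<Longrightarrow> x$k$k = 0"
  unfolding T_def using exhaust_3[of k] by (auto simp: mm3 W_nth smat_nth)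

lemma W_in_T_prop:
  assumes "W s \<in> T t"
  shows "\<exists>a. \<forall>j. s j = a * t j"
proof -
  obtain a b where e: "W s = smat a (W t) + smat b (W t ** W t)" using assms(1) by (auto simp: T_def)
  have "W s $2$1 = (smat a (W t) + smat b (W t ** W t))$2$1" "W s $3$2 = (smat a (W t) + smat b (W t ** W t))$3$2"
    "W s $1$3 = (smat a (W t) + smat b (W t ** W t))$1$3" using e by simp_all
  hence "s 1 = a * t 1" "s 2 = a * t 2" "s 3 = a * t 3" by (simp_all add: mm3 W_nth smat_nth)
  hence "\<forall>j. s j = a * t j" using exhaust_3 by metis
  thus ?thesis by blast
qed

lemma W_scale: "W (\<lambda>j. c * s j) = smat c (W s)"
  by (simp add: W_def smat_def vec_eq_iff)

lemma T_scale:
  assumes c: "c \<noteq> 0"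
  shows "T (\<lambda>j. c * s j) = T s"
proof -
  have W2: "W (\<lambda>j. c * s j) ** W (\<lambda>j. c * s j) = smat (c*c) (W s ** W s)"
    by (simp add: W_scale smat_mult_left smat_mult_right smat_smat)
  show ?thesis
  proof (rule set_eqI, rule iffI)
    fix x assume "x \<in> T (\<lambda>j. c * s j)"
    then obtain a b where "x = smat a (W (\<lambda>j. c * s j)) + smat b (W (\<lambda>j. c * s j) ** W (\<lambda>j. c * s j))"
      by (auto simp: T_def)
    hence "x = smat (a*c) (W s) + smat (b*(c*c)) (W s ** W s)" by (simp add: W_scale smat_smat smat_mult_left smat_mult_right)
    thus "x \<in> T s" by (auto simp: T_def)
  next
    fix x assume "x \<in> T s"
    then obtain a b where "x = smat a (W s) + smat b (W s ** W s)" by (auto simp: T_def)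
    hence "x = smat (a/c) (W (\<lambda>j. c * s j)) + smat (b/(c*c)) (W (\<lambda>j. c * s j) ** W (\<lambda>j. c * s j))"
      using c by (simp add: W_scale smat_smat smat_mult_left smat_mult_right)
    thus "x \<in> T (\<lambda>j. c * s j)" by (auto simp: T_def)
  qed
qed

definition sc :: "(3 \<Rightarrow> 'a::field) \<Rightarrow> (3 \<Rightarrow> 'a) \<Rightarrow> 3 \<Rightarrow> 'a" where
  "sc \<delta> s = (\<lambda>j. if j = 1 then s 1 * \<delta> 2 / \<delta> 1 else if j = 2 then s 2 * \<delta> 3 / \<delta> 2 else s 3 * \<delta> 1 / \<delta> 3)"

lemma dg_inv: "(\<forall>j. \<delta> j \<noteq> 0) \<Longrightarrow> dg \<delta> ** dg (\<lambda>j. 1 / \<delta> j) = mat 1 \<and> dg (\<lambda>j. 1 / \<delta> j) ** dg \<delta> = (mat 1 :: 'a::field m3)"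
  unfolding vec_eq_iff forall_3 by (simp add: mm3 dg_nth mat_nth)

lemma conj_W: "(\<forall>j. \<delta> j \<noteq> 0) \<Longrightarrow> dg \<delta> ** W s ** dg (\<lambda>j. 1 / \<delta> j) = W (sc \<delta> s)"
  unfolding vec_eq_iff forall_3 by (simp add: mm3 dg_nth W_nth sc_def)

lemma conj_T:
  assumes nz: "\<And>j. \<delta> j \<noteq> (0::'a::field)"
  shows "(\<lambda>x. dg \<delta> ** x ** dg (\<lambda>j. 1 / \<delta> j)) ` T s = T (sc \<delta> s)"
proof -
  let ?P = "dg \<delta> :: 'a m3" and ?P' = "dg (\<lambda>j. 1 / \<delta> j) :: 'a m3"
  have inv: "?P' ** ?P = mat 1" using dg_inv[of \<delta>] nz by blast
  have W1: "?P ** W s ** ?P' = W (sc \<delta> s)" using conj_W[of \<delta>] nz by blast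
  have W2: "?P ** (W s ** W s) ** ?P' = W (sc \<delta> s) ** W (sc \<delta> s)" using conj_mult[OF inv] W1 by metis
  show ?thesis
  proof (rule set_eqI, rule iffI)
    fix y assume "y \<in> (\<lambda>x. ?P ** x ** ?P') ` T s"
    then obtain a b where "y = ?P ** (smat a (W s) + smat b (W s ** W s)) ** ?P'" by (auto simp: T_def)
    hence "y = smat a (W (sc \<delta> s)) + smat b (W (sc \<delta> s) ** W (sc \<delta> s))" by (simp add: conj_lin W1 W2)
    thus "y \<in> T (sc \<delta> s)" by (auto simp: T_def)
  next
    fix y assume "y \<in> T (sc \<delta> s)"
    then obtain a b where "y = smat a (W (sc \<delta> s)) + smat b (W (sc \<delta> s) ** W (sc \<delta> s))" by (auto simp: T_def)
    hence "y = ?P ** (smat a (W s) + smat b (W s ** W s)) ** ?P'" by (simp add: conj_lin W1 W2)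
    thus "y \<in> (\<lambda>x. ?P ** x ** ?P') ` T s" by (auto simp: T_def)
  qed
qed

lemma conj_D0:
  assumes nz: "\<And>j. \<delta> j \<noteq> (0::'a::field)"
  shows "(\<lambda>x. dg \<delta> ** x ** dg (\<lambda>j. 1 / \<delta> j)) ` D0 = D0"
proof -
  have id: "dg \<delta> ** x ** dg (\<lambda>j. 1 / \<delta> j) = x" if "x \<in> D0" for x :: "'a m3"
  proof -
    have "isdiag x" "isdiag (dg \<delta>)" using that by (auto simp: D0_def isdiag_def dg_def)
    hence c: "dg \<delta> ** x = x ** dg \<delta>" using diag_comm by blast
    have "dg \<delta> ** x ** dg (\<lambda>j. 1 / \<delta> j) = x ** (dg \<delta> ** dg (\<lambda>j. 1 / \<delta> j))"
      by (simp only: c matrix_mul_assoc)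
    also have "\<dots> = x" using dg_inv[of \<delta>] nz by (simp del: matrix_mul_assoc)
    finally show ?thesis .
  qed
  show ?thesis
  proof (rule set_eqI, rule iffI)
    fix y :: "'a m3" assume "y \<in> (\<lambda>x. dg \<delta> ** x ** dg (\<lambda>j. 1 / \<delta> j)) ` D0"
    then obtain x where "x \<in> D0" "y = dg \<delta> ** x ** dg (\<lambda>j. 1 / \<delta> j)" by blast
    thus "y \<in> D0" using id by simp
  next
    fix y :: "'a m3" assume y: "y \<in> D0"
    hence "y = dg \<delta> ** y ** dg (\<lambda>j. 1 / \<delta> j)" using id by simp
    thus "y \<in> (\<lambda>x. dg \<delta> ** x ** dg (\<lambda>j. 1 / \<delta> j)) ` D0" using y by blast
  qed
qed

definition omega :: "'a::field" where "omega = (SOME w. w * w + w + 1 = 0)"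

lemma omega: "omega * omega + omega + (1::'a::alg_closed_field) = 0"
proof -
  have "\<exists>x::'a. (\<Sum>k\<le>2. (\<lambda>_. 1) k * x^k) = 0" by (rule alg_closed) auto
  hence "\<exists>x::'a. x*x + x + 1 = 0" by (simp add: eval_nat_numeral algebra_simps)
  thus ?thesis unfolding omega_def by (rule someI_ex)
qed

definition sA :: "3 \<Rightarrow> 'a::field" where "sA = (\<lambda>j. if j = 1 then 1 else if j = 2 then omega else omega * omega)"
definition sB :: "3 \<Rightarrow> 'a::field" where "sB = (\<lambda>j. if j = 1 then 1 else if j = 2 then omega * omega else omega)"

lemma cls:
  fixes s :: "3 \<Rightarrow> 'a::alg_closed_field"
  assumes q1: "Q (\<lambda>_. 1) s = 0" and q2: "Q s (\<lambda>_. 1) = 0" and p: "s 1 * s 2 * s 3 = 1"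
  shows "T s = T sA \<or> T s = T sB"
proof -
  have e1: "s 1 + s 2 + s 3 = 0" using q2 by (simp add: Q_def algebra_simps)
  have e2: "s 1 * s 2 + s 2 * s 3 + s 3 * s 1 = 0" using q1 by (simp add: Q_def algebra_simps)
  have w: "omega * omega + omega + (1::'a) = 0" by (rule omega)
  have s1: "s 1 \<noteq> 0" using p by auto
  have "(s 2 - s 1 * omega) * (s 2 - s 1 * (omega * omega)) = 0" using e1 e2 w by algebra
  hence "s 2 = s 1 * omega \<or> s 2 = s 1 * (omega * omega)" by auto
  thus ?thesis
  proof
    assume a: "s 2 = s 1 * omega"
    have b: "s 3 = s 1 * (omega * omega)" using a e1 w by algebra
    have "s = (\<lambda>j. s 1 * sA j)"
    proof (rule ext)
      fix j show "s j = s 1 * sA j" using exhaust_3[of j] a b by (auto simp: sA_def)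
    qed
    hence "T s = T (\<lambda>j. s 1 * sA j)" by (rule arg_cong[where f=T])
    hence "T s = T sA" using T_scale[OF s1, of sA] by (simp only:)
    thus ?thesis by blast
  next
    assume a: "s 2 = s 1 * (omega * omega)"
    have b: "s 3 = s 1 * omega" using a e1 w by algebra
    have "s = (\<lambda>j. s 1 * sB j)"
    proof (rule ext)
      fix j show "s j = s 1 * sB j" using exhaust_3[of j] a b by (auto simp: sB_def)
    qed
    hence "T s = T (\<lambda>j. s 1 * sB j)" by (rule arg_cong[where f=T])
    hence "T s = T sB" using T_scale[OF s1, of sB] by (simp only:)
    thus ?thesis by blast
  qed
qed

lemma orth_img:
  fixes g g' :: "'a::field m3"
  assumes "g' ** g = mat 1" "\<forall>x\<in>A. \<forall>y\<in>B. trace (x ** y) = (0::'a::field)"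
  shows "\<forall>x\<in>(\<lambda>x. g ** x ** g') ` A. \<forall>y\<in>(\<lambda>x. g ** x ** g') ` B. trace (x ** y) = 0"
proof (intro ballI)
  fix x y assume "x \<in> (\<lambda>x. g ** x ** g') ` A" "y \<in> (\<lambda>x. g ** x ** g') ` B"
  then obtain a b where ab: "a \<in> A" "b \<in> B" "x = g ** a ** g'" "y = g ** b ** g'" by blast
  have "trace (x ** y) = trace (g ** (a ** b) ** g')" using ab conj_mult[OF assms(1)] by simp
  also have "\<dots> = trace (a ** b)" using trace_conj[OF assms(1)] by simp
  finally show "trace (x ** y) = 0" using assms(2) ab by simp
qed

lemma img_comp: "(\<lambda>x. a ** x ** a') ` ((\<lambda>x. b ** x ** b') ` S) = (\<lambda>x. (a ** b) ** x ** (b' ** a')) ` (S::'a::field m3 set)"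
  by (simp add: image_image matrix_mul_assoc)

lemma img_cancel: "g' ** g = mat 1 \<Longrightarrow> (\<lambda>x. g' ** x ** g) ` ((\<lambda>x. g ** x ** g') ` S) = (S::'a::field m3 set)"
  by (simp add: img_comp)

lemma zero_diag:
  fixes x :: "'a::field m3"
  assumes "\<forall>d\<in>D0. trace (x ** d) = 0" "trace x = 0" "(3::'a) \<noteq> 0"
  shows "x$k$k = 0"
proof -
  define d1 where "d1 = dg (\<lambda>i. if i = 1 then 1 else if i = 2 then -1 else (0::'a))"
  define d2 where "d2 = dg (\<lambda>i. if i = 1 then 0 else if i = 2 then 1 else (-1::'a))"
  have D1: "d1 \<in> D0" "d2 \<in> D0" by (auto simp: d1_def d2_def D0_def isdiag_def dg_def tr3)
  have "x$1$1 - x$2$2 = 0" using assms(1) D1(1) by (auto simp: tr3 mm3 d1_def dg_nth)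
  moreover have "x$2$2 - x$3$3 = 0" using assms(1) D1(2) by (auto simp: tr3 mm3 d2_def dg_nth)
  moreover have "x$1$1 + x$2$2 + x$3$3 = 0" using assms(2) by (simp add: tr3)
  ultimately have "3 * x$1$1 = 0" "x$2$2 = x$1$1" "x$3$3 = x$2$2" by algebra+
  hence "x$1$1 = 0 \<and> x$2$2 = 0 \<and> x$3$3 = 0" using assms(3) by simp
  thus ?thesis using exhaust_3[of k] by auto
qed

definition perm23 :: "bool \<Rightarrow> nat \<Rightarrow> nat" where
  "perm23 b i = (if b \<and> i = 2 then 3 else if b \<and> i = 3 then 2 else i)"

definition Std :: "nat \<Rightarrow> 'a::alg_closed_field m3 set" where
  "Std i = (if i = 0 then D0 else if i = 1 then T (\<lambda>_. 1) else if i = 2 then T sA else T sB)"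

lemma inv_comp:
  assumes "a ** a' = mat 1" "b ** b' = mat (1::'a::field)"
  shows "(a ** b) ** (b' ** a') = (mat 1 :: 'a^'n^'n)"
proof -
  have "(a ** b) ** (b' ** a') = a ** ((b ** b') ** a')" by (simp add: matrix_mul_assoc)
  thus ?thesis using assms by simp
qed

lemma Q_self: "Q s s = 3 * (s 1 * s 2 * s 3)"
  by (simp add: Q_def algebra_simps)

lemma sc_prod: "\<forall>j. \<delta> j \<noteq> 0 \<Longrightarrow> sc \<delta> s 1 * sc \<delta> s 2 * sc \<delta> s 3 = s 1 * s 2 * (s 3::'a::field)"
  by (simp add: sc_def field_simps)

lemma NF:
  fixes H :: "nat \<Rightarrow> 'a::alg_closed_field m3 set"
  assumes ch: "CHAR('a) > 3" and cod: "COD H"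
  shows "\<exists>g g' b. g ** g' = mat 1 \<and> g' ** g = mat 1 \<and> (\<forall>i\<le>3. (\<lambda>x. g ** x ** g') ` H i = Std (perm23 b i))"
proof -
  have two: "(2::'a) \<noteq> 0" and three: "(3::'a) \<noteq> 0" using char_23[OF ch] by auto
  have cc: "\<And>i. i \<le> 3 \<Longrightarrow> classical_cartan (H i)" using cod by (simp add: COD_def)
  have orth: "\<forall>x\<in>H i. \<forall>y\<in>H j. trace (x ** y) = 0" if "i \<le> 3" "j \<le> 3" "i \<noteq> j" for i j
  proof (intro ballI)
    fix x y assume "x \<in> H i" "y \<in> H j"
    hence "killing x y = 0" using cod that by (simp add: COD_def)
    hence "2 * 3 * trace (x ** y) = 0" by (simp add: killing_def)
    thus "trace (x ** y) = 0" using two three by (metis mult_eq_0_iff)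
  qed
  have ex: "\<forall>i. \<exists>p. i \<le> 3 \<longrightarrow> (fst p ** snd p = mat 1 \<and> snd p ** fst p = mat 1 \<and> H i = (\<lambda>d. fst p ** d ** snd p) ` D0)"
  proof
    fix i show "\<exists>p. i \<le> 3 \<longrightarrow> (fst p ** snd p = mat 1 \<and> snd p ** fst p = mat 1 \<and> H i = (\<lambda>d. fst p ** d ** snd p) ` D0)"
    proof (cases "i \<le> 3")
      case True
      then obtain g g' where "g ** g' = mat 1 \<and> g' ** g = mat 1 \<and> H i = (\<lambda>d. g ** d ** g') ` D0"
        using torus[OF cc[OF True] ch] by blast
      thus ?thesis by (intro exI[of _ "(g, g')"]) simp
    qed simp
  qed
  from choice[OF ex] obtain F where F: "\<forall>i. i \<le> 3 \<longrightarrow> (fst (F i) ** snd (F i) = mat 1 \<and> snd (F i) ** fst (F i) = mat 1 \<and> H i = (\<lambda>d. fst (F i) ** d ** snd (F i)) ` D0)"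
    by blast
  define G where "G i = fst (F i)" for i
  define G' where "G' i = snd (F i)" for i
  have G: "G i ** G' i = mat 1 \<and> G' i ** G i = mat 1 \<and> H i = (\<lambda>d. G i ** d ** G' i) ` D0" if "i \<le> 3" for i
    using F that by (simp add: G_def G'_def)
  define K where "K i = (\<lambda>x. G' 0 ** x ** G 0) ` H i" for i
  have K0: "K 0 = D0" using G[of 0] img_cancel[of "G' 0" "G 0" D0] by (simp add: K_def)
  have Korth: "\<forall>x\<in>K i. \<forall>y\<in>K j. trace (x ** y) = 0" if "i \<le> 3" "j \<le> 3" "i \<noteq> j" for i j
    unfolding K_def using orth_img[of "G 0" "G' 0" "H i" "H j"] orth[OF that] G[of 0] by simp
  have KT: "\<exists>r. r 1 * r 2 * r 3 = 1 \<and> K i = T r" if i: "1 \<le> i" "i \<le> 3" for i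
  proof -
    let ?g = "G' 0 ** G i" and ?g' = "G' i ** G 0"
    have Ki: "K i = (\<lambda>x. ?g ** x ** ?g') ` D0" using G[OF i(2)] by (simp add: K_def img_comp)
    have inv1: "?g ** ?g' = mat 1" using G[OF i(2)] G[of 0] inv_comp[of "G' 0" "G 0" "G i" "G' i"] by simp
    have inv2: "?g' ** ?g = mat 1" using G[OF i(2)] G[of 0] inv_comp[of "G' i" "G i" "G 0" "G' 0"] by simp
    have zd: "\<forall>d\<in>D0. \<forall>k. (?g ** d ** ?g')$k$k = 0"
    proof (intro ballI allI)
      fix d :: "'a m3" and k assume d: "d \<in> D0"
      let ?x = "?g ** d ** ?g'"
      have xK: "?x \<in> K i" using Ki d by blast
      have "\<forall>e\<in>D0. trace (?x ** e) = 0" using Korth[of i 0] i xK K0 by auto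
      moreover have "trace ?x = 0" using trace_conj[OF inv2, of d] d by (simp add: D0_def)
      ultimately show "?x$k$k = 0" using zero_diag three by blast
    qed
    show ?thesis using ZD[OF inv1 inv2 zd three] Ki by simp
  qed
  obtain r1 where r1: "r1 1 * r1 2 * r1 3 = 1" "K 1 = T r1" using KT[of 1] by auto
  obtain r2 where r2: "r2 1 * r2 2 * r2 3 = 1" "K 2 = T r2" using KT[of 2] by auto
  obtain r3 where r3: "r3 1 * r3 2 * r3 3 = 1" "K 3 = T r3" using KT[of 3] by auto
  define \<delta> where "\<delta> = (\<lambda>j::3. if j = 1 then 1 else if j = 2 then 1 / r1 1 else 1 / (r1 1 * r1 2))"
  have r1nz: "r1 1 \<noteq> 0" "r1 2 \<noteq> 0" "r1 3 \<noteq> 0" using r1(1) by auto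
  have dnz: "\<forall>j. \<delta> j \<noteq> 0" using r1nz by (simp add: \<delta>_def)
  define L where "L i = (\<lambda>x. dg \<delta> ** x ** dg (\<lambda>j. 1 / \<delta> j)) ` K i" for i
  have dinv: "dg \<delta> ** dg (\<lambda>j. 1 / \<delta> j) = mat 1" "dg (\<lambda>j. 1 / \<delta> j) ** dg \<delta> = (mat 1 :: 'a m3)"
    using dg_inv dnz by blast+
  have L0: "L 0 = D0" using conj_D0[of \<delta>] dnz by (simp add: L_def K0)
  have sc1: "sc \<delta> r1 = (\<lambda>_. 1)"
  proof
    fix j show "sc \<delta> r1 j = 1" using exhaust_3[of j] r1nz r1(1)
      by (auto simp: sc_def \<delta>_def field_simps)
  qed
  have L1: "L 1 = T (\<lambda>_. 1)" using conj_T[of \<delta> r1] dnz sc1 unfolding L_def r1(2) by simp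
  have L2: "L 2 = T (sc \<delta> r2)" using conj_T[of \<delta> r2] dnz unfolding L_def r2(2) by simp
  have L3: "L 3 = T (sc \<delta> r3)" using conj_T[of \<delta> r3] dnz unfolding L_def r3(2) by simp
  have p2: "sc \<delta> r2 1 * sc \<delta> r2 2 * sc \<delta> r2 3 = 1" using sc_prod[OF dnz] r2(1) by simp
  have p3: "sc \<delta> r3 1 * sc \<delta> r3 2 * sc \<delta> r3 3 = 1" using sc_prod[OF dnz] r3(1) by simp
  have Lorth: "\<forall>x\<in>L i. \<forall>y\<in>L j. trace (x ** y) = 0" if "i \<le> 3" "j \<le> 3" "i \<noteq> j" for i j
    unfolding L_def using orth_img[OF dinv(2) Korth[OF that]] .
  have c2: "T (sc \<delta> r2) = T sA \<or> T (sc \<delta> r2) = T sB"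
    using cls[OF orth_Q(1)[OF Lorth[of 1 2, unfolded L1 L2]] orth_Q(2)[OF Lorth[of 1 2, unfolded L1 L2]] p2] by simp
  have c3: "T (sc \<delta> r3) = T sA \<or> T (sc \<delta> r3) = T sB"
    using cls[OF orth_Q(1)[OF Lorth[of 1 3, unfolded L1 L3]] orth_Q(2)[OF Lorth[of 1 3, unfolded L1 L3]] p3] by simp
  have ne: "T (sc \<delta> r2) \<noteq> T (sc \<delta> r3)"
  proof
    assume eq: "T (sc \<delta> r2) = T (sc \<delta> r3)"
    have "Q (sc \<delta> r2) (sc \<delta> r2) = 0" using orth_Q(1)[OF Lorth[of 2 3, unfolded L2 L3 eq[symmetric]]] by simp
    thus False using Q_self[of "sc \<delta> r2"] p2 three by simp
  qed
  define g where "g = dg \<delta> ** G' 0"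
  define g' where "g' = G 0 ** dg (\<lambda>j. 1 / \<delta> j)"
  have gL: "(\<lambda>x. g ** x ** g') ` H i = L i" for i by (simp add: g_def g'_def L_def K_def img_comp)
  have gg: "g ** g' = mat 1" "g' ** g = mat 1" using G[of 0] dinv
      inv_comp[of "dg \<delta>" "dg (\<lambda>j. 1 / \<delta> j)" "G' 0" "G 0"] inv_comp[of "G 0" "G' 0" "dg (\<lambda>j. 1 / \<delta> j)" "dg \<delta>"]
    by (simp_all add: g_def g'_def)
  obtain b where b: "(T (sc \<delta> r2) = Std (perm23 b 2)) \<and> (T (sc \<delta> r3) = Std (perm23 b 3))"
  proof (cases "T (sc \<delta> r2) = T sA")
    case True
    hence "T (sc \<delta> r3) = T sB" using c3 ne by auto
    thus ?thesis using True that[of False] by (simp add: perm23_def Std_def)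
  next
    case False
    hence "T (sc \<delta> r2) = T sB" "T (sc \<delta> r3) = T sA" using c2 c3 ne by auto
    thus ?thesis using that[of True] by (simp add: perm23_def Std_def)
  qed
  have "\<forall>i\<le>3. (\<lambda>x. g ** x ** g') ` H i = Std (perm23 b i)"
  proof (intro allI impI)
    fix i :: nat assume "i \<le> 3"
    hence "i = 0 \<or> i = 1 \<or> i = 2 \<or> i = 3" by arith
    thus "(\<lambda>x. g ** x ** g') ` H i = Std (perm23 b i)"
      using gL L0 L1 L2 L3 b by (auto simp: Std_def perm23_def)
  qed
  thus ?thesis using gg by blast
qed

lemma conj_diff:
  fixes a a' x y :: "'a::field m3"
  shows "a ** (x - y) ** a' = a ** x ** a' - a ** y ** a'"
proof -
  have e: "x - y = smat 1 x + smat (-1) y" "\<And>z::'a m3. z - a ** y ** a' = smat 1 z + smat (-1) (a ** y ** a')"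
    by (simp_all add: smat_def vec_eq_iff)
  show ?thesis by (simp only: e conj_lin)
qed
lemma conj_add:
  fixes a a' x y :: "'a::field m3"
  shows "a ** (x + y) ** a' = a ** x ** a' + a ** y ** a'"
  by (simp add: matrix_add_ldistrib mm_rdistrib)

lemma conj_aut:
  fixes a a' :: "'a::field m3"
  assumes aa: "a ** a' = mat 1" "a' ** a = mat 1"
  shows "lie_automorphism (\<lambda>x. a ** x ** a')"
  unfolding lie_automorphism_def
proof (intro conjI ballI allI)
  have tr: "trace (a ** x ** a') = trace x" for x using trace_conj[OF aa(2)] .
  have inj: "inj_on (\<lambda>x. a ** x ** a') sl"
  proof (rule inj_onI)
    fix x y assume "a ** x ** a' = a ** y ** a'"
    hence "a' ** (a ** x ** a') ** a = a' ** (a ** y ** a') ** a" by simp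
    thus "x = y" using img_cancel[OF aa(2), of "{x}"] img_cancel[OF aa(2), of "{y}"] by simp
  qed
  have img: "(\<lambda>x. a ** x ** a') ` sl = sl"
  proof (rule set_eqI, rule iffI)
    fix y assume "y \<in> (\<lambda>x. a ** x ** a') ` sl"
    thus "y \<in> sl" using tr by (auto simp: sl_def)
  next
    fix y :: "'a m3" assume y: "y \<in> sl"
    have "y = a ** (a' ** y ** a) ** a'" using img_cancel[OF aa(1), of "{y}"] by simp
    moreover have "a' ** y ** a \<in> sl" using y trace_conj[OF aa(1), of y] by (simp add: sl_def)
    ultimately show "y \<in> (\<lambda>x. a ** x ** a') ` sl" by blast
  qed
  show "bij_betw (\<lambda>x. a ** x ** a') sl sl" using inj img by (simp add: bij_betw_def)
  fix x y
  show "a ** (x + y) ** a' = a ** x ** a' + a ** y ** a'" by (rule conj_add)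
  show "a ** lie x y ** a' = lie (a ** x ** a') (a ** y ** a')"
    by (simp add: lie_def conj_diff conj_mult[OF aa(2)])
next
  fix c x
  show "a ** smat c x ** a' = smat c (a ** x ** a')" by (simp add: smat_mult_left smat_mult_right)
qed

lemma perm23_inv: "perm23 b (perm23 b i) = i" by (simp add: perm23_def)
lemma perm23_le: "i \<le> 3 \<Longrightarrow> perm23 b i \<le> 3" by (simp add: perm23_def)

lemma Std_inj:
  assumes three: "(3::'a::alg_closed_field) \<noteq> 0" and ij: "i \<le> 3" "j \<le> 3" and eq: "(Std i :: 'a m3 set) = Std j"
  shows "i = j"
proof -
  have w: "omega * omega + omega + (1::'a) = 0" by (rule omega)
  have w1: "omega \<noteq> (1::'a)" using w three by auto
  have w0: "omega \<noteq> (0::'a)" using w by auto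
  have w2: "omega * omega \<noteq> (1::'a)"
  proof
    assume "omega * omega = (1::'a)"
    hence "(omega::'a) = -2" using w by (simp add: algebra_simps) algebra
    hence "(-2) * (-2) = (1::'a)" using \<open>omega * omega = 1\<close> by simp
    hence "(3::'a) + 1 = 0 + 1" by simp
    hence "(3::'a) = 0" by (rule add_right_imp_eq)
    thus False using three by simp
  qed
  have w3: "omega * omega \<noteq> (omega::'a)"
  proof
    assume "omega * omega = (omega::'a)"
    hence "(omega::'a) * (omega - 1) = 0" by (simp add: right_diff_distrib)
    thus False using w0 w1 by simp
  qed
  define d1 where "d1 = dg (\<lambda>i. if i = 1 then 1 else if i = 2 then -1 else (0::'a))"
  have d1: "d1 \<in> D0" "d1 $1$1 \<noteq> 0" by (auto simp: d1_def D0_def isdiag_def dg_def tr3)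
  have D0T: "D0 \<noteq> T s" for s :: "3 \<Rightarrow> 'a"
    using d1 T_zero_diag by blast
  have TT: "T s \<noteq> T t" if "s 1 = t 1" "t 1 \<noteq> 0" "s 2 \<noteq> t 2" for s t :: "3 \<Rightarrow> 'a"
  proof
    assume "T s = T t"
    hence "W s \<in> T t" using W_in_T(1)[of s] by simp
    then obtain a where a: "\<forall>j. s j = a * t j" using W_in_T_prop by blast
    hence "a = 1" using that a[rule_format, of 1] by simp
    thus False using that a[rule_format, of 2] by simp
  qed
  have AB: "T (\<lambda>_. 1) \<noteq> T (sA::3\<Rightarrow>'a)" "T (\<lambda>_. 1) \<noteq> T (sB::3\<Rightarrow>'a)" "T (sA::3\<Rightarrow>'a) \<noteq> T sB"
    using TT[of "\<lambda>_. 1" sA] TT[of "\<lambda>_. 1" sB] TT[of sA sB] w1 w2 w3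
    by (auto simp: sA_def sB_def)
  have "i = 0 \<or> i = 1 \<or> i = 2 \<or> i = 3" "j = 0 \<or> j = 1 \<or> j = 2 \<or> j = 3" using ij by arith+
  thus ?thesis using eq D0T AB by (auto simp: Std_def dest: sym)
qed

theorem theorem3p8:
  fixes H H' :: "nat \<Rightarrow> ('a::alg_closed_field ^ 3 ^ 3) set"
  assumes "CHAR('a) > 3"
    and "COD H" and "COD H'"
  shows "COD_conjugate H H'"
proof -
  have three: "(3::'a) \<noteq> 0" using char_23[OF assms(1)] by auto
  obtain g g' b where g: "g ** g' = mat 1" "g' ** g = mat 1" and gH: "\<forall>i\<le>3. (\<lambda>x. g ** x ** g') ` H i = Std (perm23 b i)"
    using NF[OF assms(1,2)] by blast
  obtain h h' c where h: "h ** h' = mat 1" "h' ** h = mat 1" and hH: "\<forall>i\<le>3. (\<lambda>x. h ** x ** h') ` H' i = Std (perm23 c i)"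
    using NF[OF assms(1,3)] by blast
  define a where "a = h' ** g"
  define a' where "a' = g' ** h"
  have aa: "a ** a' = mat 1" "a' ** a = mat 1"
    using inv_comp[of h' h g g'] inv_comp[of g' g h h'] g h by (simp_all add: a_def a'_def)
  have phi: "(\<lambda>x. a ** x ** a') ` S = (\<lambda>x. h' ** x ** h) ` ((\<lambda>x. g ** x ** g') ` S)" for S
    by (simp add: img_comp a_def a'_def)
  have H'S: "H' j = (\<lambda>x. h' ** x ** h) ` Std (perm23 c j)" if "j \<le> 3" for j
    using hH that img_cancel[OF h(2), of "H' j"] by simp
  show ?thesis
    unfolding COD_conjugate_def
  proof (intro exI conjI allI impI)
    show "lie_automorphism (\<lambda>x. a ** x ** a')" using conj_aut[OF aa] .
    fix i :: nat assume i: "i \<le> CARD(3)"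
    hence i3: "i \<le> 3" by simp
    define j where "j = perm23 c (perm23 b i)"
    have j3: "j \<le> 3" using i3 by (simp add: j_def perm23_le)
    have img: "(\<lambda>x. a ** x ** a') ` H i = (\<lambda>x. h' ** x ** h) ` Std (perm23 b i)"
      using phi gH i3 by simp
    have Hj: "(\<lambda>x. a ** x ** a') ` H i = H' j"
      using img H'S[OF j3] by (simp add: j_def perm23_inv)
    show "\<exists>!j. j \<le> CARD(3) \<and> (\<lambda>x. a ** x ** a') ` H i = H' j"
    proof (rule ex1I[of _ j])
      show "j \<le> CARD(3) \<and> (\<lambda>x. a ** x ** a') ` H i = H' j" using j3 Hj by simp
    next
      fix k assume k: "k \<le> CARD(3) \<and> (\<lambda>x. a ** x ** a') ` H i = H' k"
      hence k3: "k \<le> 3" by simp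
      have "Std (perm23 c k) = (\<lambda>x. h ** x ** h') ` H' k" using hH k3 by simp
      also have "\<dots> = (\<lambda>x. h ** x ** h') ` H' j" using k Hj by simp
      also have "\<dots> = Std (perm23 c j)" using hH j3 by simp
      finally have "perm23 c k = perm23 c j"
        using Std_inj[OF three] perm23_le k3 j3 by blast
      hence "perm23 c (perm23 c k) = perm23 c (perm23 c j)" by simp
      thus "k = j" by (simp add: perm23_inv)
    qed
  qed
qed

end
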